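(* Let $n>m\geq 0$ be integers and $\gamma$ a real number, and let $G^{\gamma}_{mn}$ be Budak's function. Then for all real $\omega$, $$|G^{\gamma}_{mn}(j\omega)|^2=\left[\frac{(2n)!}{(2m)!}\right]^2\frac{m!}{n!}\cdot\frac{\sum_{i=0}^{m}\binom{m}{i}\frac{(2i)!}{i!}(m+i)!\,[2(\gamma-1)\omega]^{2(m-i)}}{\sum_{k=0}^{n}\binom{n}{k}\frac{(2k)!}{k!}(n+k)!\,(2\gamma\omega)^{2(n-k)}}.$$
   Context: Generalized Bessel polynomials: $B_n(s,\alpha,\beta)=\sum_{k=0}^{n}\binom{n}{k}\frac{(n+k+\alpha-2)^{(k)}}{\beta^k}s^{n-k}$, with $(q)^{(k)}=q(q-1)\cdots(q-k+1)$, $(q)^{(0)}=1$; in particular $B_n(s,2,1)=\sum_{k=0}^n\binom{n}{k}\frac{(n+k)!}{n!}s^{n-k}$. Budak's function is $$G^{\gamma}_{mn}(s)=K\,\frac{B_m(2(\gamma-1)s,2,1)}{B_n(2\gamma s,2,1)},\qquad K=\frac{B_n(0,2,1)}{B_m(0,2,1)},$$ so that $G^{\gamma}_{mn}(0)=1$. *)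

theory Defs
  imports "HOL-Analysis.Analysis"
begin

definition falling_fact :: "complex \<Rightarrow> nat \<Rightarrow> complex" where
  "falling_fact q k = (\<Prod>i<k. q - of_nat i)"

definition bessel_gen :: "nat \<Rightarrow> complex \<Rightarrow> complex \<Rightarrow> complex \<Rightarrow> complex" where
  "bessel_gen n s \<alpha> \<beta> =
     (\<Sum>k=0..n. of_nat (n choose k) * falling_fact (of_nat n + of_nat k + \<alpha> - 2) k
                 / \<beta> ^ k * s ^ (n - k))"

definition budak :: "real \<Rightarrow> nat \<Rightarrow> nat \<Rightarrow> complex \<Rightarrow> complex" where
  "budak \<gamma> m n s =
     (bessel_gen n 0 2 1 / bessel_gen m 0 2 1) *
     (bessel_gen m (2 * (of_real \<gamma> - 1) * s) 2 1 / bessel_gen n (2 * of_real \<gamma> * s) 2 1)"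

end

theory Submission
  imports Defs "HOL-Computational_Algebra.Polynomial"
begin


lemma ff_fact: "fact a * falling_fact (of_nat a + of_nat k) k = (fact (a+k) :: complex)"
proof (induction k)
  case 0 then show ?case by (simp add: falling_fact_def)
next
  case (Suc k)
  have "falling_fact (of_nat a + of_nat (Suc k)) (Suc k)
        = (of_nat (a + Suc k)) * falling_fact (of_nat a + of_nat k) k"
    unfolding falling_fact_def by (subst prod.lessThan_Suc_shift) (simp add: algebra_simps)
  then have "fact a * falling_fact (of_nat a + of_nat (Suc k)) (Suc k)
        = of_nat (Suc (a + k)) * (fact a * falling_fact (of_nat a + of_nat k) k)" by simp
  also have "\<dots> = fact (Suc (a+k))" using Suc by (simp only: fact_Suc of_nat_mult)
  finally show ?case by simp
qed

definition dd :: "nat \<Rightarrow> nat \<Rightarrow> real" where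
  "dd n j = real (n choose j) * fact (2*n - j) / fact n"

definition BP :: "nat \<Rightarrow> complex poly" where
  "BP n = (\<Sum>j\<in>{0..n}. monom (of_real (dd n j)) j)"

lemma coeff_BP: "coeff (BP n) j = of_real (dd n j)"
  by (auto simp: BP_def coeff_sum dd_def)

lemma poly_BP: "poly (BP n) s = (\<Sum>j=0..n. of_real (dd n j) * s ^ j)"
  by (simp add: BP_def poly_sum poly_monom)

lemma bessel_BP: "bessel_gen n s 2 1 = poly (BP n) s"
proof -
  have "bessel_gen n s 2 1 = (\<Sum>k=0..n. of_nat (n choose k) * falling_fact (of_nat n + of_nat k) k * s ^ (n - k))"
    unfolding bessel_gen_def by simp
  also have "\<dots> = (\<Sum>j=0..n. of_nat (n choose (n-j)) * falling_fact (of_nat n + of_nat (n-j)) (n-j) * s ^ (n - (n-j)))"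
    by (subst sum.atLeastAtMost_rev) simp
  also have "\<dots> = (\<Sum>j=0..n. of_real (dd n j) * s ^ j)"
  proof (rule sum.cong[OF refl])
    fix j assume j: "j \<in> {0..n}"
    have "falling_fact (of_nat n + of_nat (n-j)) (n-j) = (fact (n + (n-j)) / fact n :: complex)"
      using ff_fact[of n "n-j"] by (simp add: field_simps)
    moreover have "n + (n-j) = 2*n - j" using j by auto
    moreover have "n choose (n-j) = n choose j" using j by (simp add: binomial_symmetric[symmetric])
    ultimately show "of_nat (n choose (n-j)) * falling_fact (of_nat n + of_nat (n-j)) (n-j) * s ^ (n - (n-j)) = of_real (dd n j) * s ^ j"
      using j by (simp add: dd_def)
  qed
  finally show ?thesis by (simp add: poly_BP)
qed



lemma dd_eq: "j \<le> n \<Longrightarrow> dd n j = fact (2*n-j) / (fact j * fact (n-j))"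
  by (simp add: dd_def binomial_fact)

lemma dd_zero: "n < j \<Longrightarrow> dd n j = 0"
  by (simp add: dd_def)

lemma dd_rec: "dd (n+2) j = 2*(2*n+3) * dd (n+1) j + (if 2 \<le> j then dd n (j-2) else 0)"
proof -
  consider "j = 0" | "j = 1" | i where "j = i+2" "i < n" | "j = n+2" | "j > n+2"
  proof (cases "j < 2")
    case True then show ?thesis using that(1,2) by linarith
  next
    case False
    show ?thesis
    proof (cases "j - 2 < n")
      case True then show ?thesis using that(3)[of "j-2"] False by simp
    next
      case False then show ?thesis using that(4,5) \<open>\<not> j < 2\<close> by linarith
    qed
  qed
  then show ?thesis
  proof cases
    case 1
    then show ?thesis
      by (simp add: dd_eq eval_nat_numeral fact_Suc divide_simps del: of_nat_Suc) (simp add: algebra_simps)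
  next
    case 2
    then show ?thesis
      by (simp add: dd_eq eval_nat_numeral fact_Suc divide_simps del: of_nat_Suc) (simp add: algebra_simps)
  next
    case 3
    then obtain q where n: "n = i + q + 1" by (metis add.commute add_Suc less_iff_Suc_add Suc_eq_plus1)
    have e1: "dd (n+2) j = fact (i+2*q+4) / (fact (i+2) * fact (q+1))"
      using 3 n by (simp add: dd_eq algebra_simps)
    have e2: "dd (n+1) j = fact (i+2*q+2) / (fact (i+2) * fact q)"
      using 3 n by (simp add: dd_eq algebra_simps)
    have e3: "dd n i = fact (i+2*q+2) / (fact i * fact (q+1))"
      using 3 n by (simp add: dd_eq algebra_simps)
    have a: "fact (i+2*q+4) = (of_nat (i+2*q+4)) * of_nat (i+2*q+3) * (fact (i+2*q+2)::real)"
      by (simp add: eval_nat_numeral fact_Suc)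
    have b: "fact (i+2) = (of_nat (i+2)) * of_nat (i+1) * (fact i::real)"
      by (simp add: eval_nat_numeral fact_Suc)
    have c: "fact (q+1) = (of_nat (q+1)) * (fact q::real)"
      by simp
    have "dd (n+2) j = 2*(2*n+3)*dd (n+1) j + dd n i"
      unfolding e1 e2 e3 a b c using n by (simp add: divide_simps) (simp add: algebra_simps)
    then show ?thesis using 3 by simp
  next
    case 4
    then show ?thesis by (simp add: dd_eq dd_zero)
  next
    case 5
    then show ?thesis by (simp add: dd_zero)
  qed
qed


lemma BP_rec: "BP (n+2) = smult (of_real (2*(2*n+3))) (BP (n+1)) + pCons 0 (pCons 0 (BP n))"
proof (rule poly_eqI)
  fix j
  have r: "\<And>j. complex_of_real (dd (Suc (Suc n)) j) = of_real (2*(2*n+3)) * of_real (dd (Suc n) j) + (if 2 \<le> j then of_real (dd n (j-2)) else 0)"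
    subgoal for j using dd_rec[of n j] by (cases "2 \<le> j") simp_all
    done
  show "coeff (BP (n+2)) j = coeff (smult (of_real (2*(2*n+3))) (BP (n+1)) + pCons 0 (pCons 0 (BP n))) j"
    by (cases j; cases "j - 1") (auto simp: coeff_BP coeff_pCons r)
qed

definition ee :: "nat \<Rightarrow> nat \<Rightarrow> real" where
  "ee N j = real (N choose j) * fact (2*(N-j)) * fact (2*N-j) / (fact (N-j) * fact N)"

lemma ee_eq: "j \<le> N \<Longrightarrow> ee N j = fact (2*(N-j)) * fact (2*N-j) / ((fact (N-j))^2 * fact j)"
  by (simp add: ee_def binomial_fact power2_eq_square)

lemma ee_zero: "N < j \<Longrightarrow> ee N j = 0"
  by (simp add: ee_def)

lemma ee_R2: "4*(j+1) * ee (n+2) (j+1) = (4*(2*n+3) - 4*j) * ee (n+1) j"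
proof (cases "j \<le> n+1")
  case True
  then obtain p where N: "n + 1 = j + p" by (metis le_add_diff_inverse)
  have e1: "ee (n+2) (j+1) = fact (2*p) * fact (j+2*p+1) / ((fact p)^2 * fact (j+1))"
    using N by (simp add: ee_eq algebra_simps)
  have e2: "ee (n+1) j = fact (2*p) * fact (j+2*p) / ((fact p)^2 * fact j)"
    using N by (simp add: ee_eq algebra_simps)
  have a: "fact (j+2*p+1) = (of_nat (j+2*p+1)) * (fact (j+2*p)::real)" by simp
  have b: "fact (j+1) = (of_nat (j+1)) * (fact j::real)" by simp
  have n: "real n = real j + real p - 1" using N by linarith
  show ?thesis unfolding e1 e2 a b n by (simp add: divide_simps) (simp add: algebra_simps)
next
  case False
  then show ?thesis by (simp add: ee_zero)
qed

lemma ee_R1: "ee (n+2) j = (2*(2*n+3)) * (2*(2*n+3) - 4*j) * ee (n+1) j + (if 2 \<le> j then ee n (j-2) else 0)"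
proof -
  consider "j = 0" | "j = 1" | i where "j = i+2" "i < n" | "j = n+2" | "j > n+2"
  proof (cases "j < 2")
    case True then show ?thesis using that(1,2) by linarith
  next
    case False
    show ?thesis
    proof (cases "j - 2 < n")
      case True then show ?thesis using that(3)[of "j-2"] False by simp
    next
      case False then show ?thesis using that(4,5) \<open>\<not> j < 2\<close> by linarith
    qed
  qed
  then show ?thesis
  proof cases
    case 1
    then show ?thesis
      by (simp add: ee_eq eval_nat_numeral fact_Suc divide_simps del: of_nat_Suc) (simp add: algebra_simps)
  next
    case 2
    then show ?thesis
      by (simp add: ee_eq eval_nat_numeral fact_Suc divide_simps del: of_nat_Suc) (simp add: algebra_simps)
  next
    case 3
    then obtain q where n: "n = i + q + 1" by (metis add.commute add_Suc less_iff_Suc_add Suc_eq_plus1)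
    have e1: "ee (n+2) j = fact (2*q+2) * fact (i+2*q+4) / ((fact (q+1))^2 * fact (i+2))"
      using 3 n by (simp add: ee_eq algebra_simps)
    have e2: "ee (n+1) j = fact (2*q) * fact (i+2*q+2) / ((fact q)^2 * fact (i+2))"
      using 3 n by (simp add: ee_eq algebra_simps)
    have e3: "ee n i = fact (2*q+2) * fact (i+2*q+2) / ((fact (q+1))^2 * fact i)"
      using 3 n by (simp add: ee_eq algebra_simps)
    have a: "fact (i+2*q+4) = (of_nat (i+2*q+4)) * of_nat (i+2*q+3) * (fact (i+2*q+2)::real)"
      by (simp add: eval_nat_numeral fact_Suc)
    have a2: "fact (2*q+2) = (of_nat (2*q+2)) * of_nat (2*q+1) * (fact (2*q)::real)"
      by (simp add: eval_nat_numeral fact_Suc)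
    have b: "fact (i+2) = (of_nat (i+2)) * of_nat (i+1) * (fact i::real)"
      by (simp add: eval_nat_numeral fact_Suc)
    have c: "fact (q+1) = (of_nat (q+1)) * (fact q::real)"
      by simp
    have "ee (n+2) j = (2*(2*n+3)) * (2*(2*n+3) - 4*j) * ee (n+1) j + ee n i"
      unfolding e1 e2 e3 a a2 b c using n 3 by (simp add: divide_simps) (simp add: algebra_simps power2_eq_square)
    then show ?thesis using 3 by simp
  next
    case 4
    then show ?thesis by (simp add: ee_eq ee_zero)
  next
    case 5
    then show ?thesis by (simp add: ee_zero)
  qed
qed



definition FP :: "nat \<Rightarrow> real poly" where
  "FP n = (\<Sum>j\<in>{0..n}. monom (ee n j) j)"
definition GP :: "nat \<Rightarrow> real poly" where
  "GP n = (\<Sum>j\<in>{0..n}. monom (4 * (real j + 1) * ee n (j+1)) j)"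

lemma coeff_FP: "coeff (FP n) j = ee n j"
  by (auto simp: FP_def coeff_sum ee_zero)
lemma coeff_GP: "coeff (GP n) j = 4 * (real j + 1) * ee n (j+1)"
  by (auto simp: GP_def coeff_sum ee_zero)

lemma FP_rec: "FP (n+2) = smult ((2*(2*real n+3))^2) (FP (n+1)) - smult (2*(2*real n+3)) (pCons 0 (GP (n+1)))
   + pCons 0 (pCons 0 (FP n))"
proof (rule poly_eqI)
  fix j
  have r: "ee (n+2) j = (2*(2*real n+3)) * (2*(2*real n+3) - 4*real j) * ee (n+1) j + (if 2 \<le> j then ee n (j-2) else 0)"
    by (rule ee_R1)
  show "coeff (FP (n+2)) j = coeff (smult ((2*(2*real n+3))^2) (FP (n+1)) - smult (2*(2*real n+3)) (pCons 0 (GP (n+1)))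
   + pCons 0 (pCons 0 (FP n))) j"
  proof (cases j)
    case 0 then show ?thesis using r by (simp add: coeff_FP coeff_GP power2_eq_square)
  next
    case (Suc i)
    then show ?thesis using r by (cases i) (simp_all add: coeff_FP coeff_GP coeff_pCons power2_eq_square algebra_simps)
  qed
qed

lemma GP_rec: "GP (n+2) = smult (4*(2*real n+3)) (FP (n+1)) - pCons 0 (GP (n+1))"
proof (rule poly_eqI)
  fix j
  have r: "4*(real j+1) * ee (n+2) (j+1) = (4*(2*real n+3) - 4*real j) * ee (n+1) j" by (rule ee_R2)
  show "coeff (GP (n+2)) j = coeff (smult (4*(2*real n+3)) (FP (n+1)) - pCons 0 (GP (n+1))) j"
    using r by (cases j) (simp_all add: coeff_FP coeff_GP coeff_pCons algebra_simps)
qed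



lemma u_rec: "poly (BP (n+2)) z = of_real (2*(2*real n+3)) * poly (BP (n+1)) z + z^2 * poly (BP n) z"
  unfolding BP_rec by (simp add: power2_eq_square algebra_simps)

lemma base_vals: "poly (BP 0) z = 1" "poly (BP (Suc 0)) z = 2 + z"
  "poly (FP 0) t = 1" "poly (FP (Suc 0)) t = 4 + t" "poly (GP (Suc 0)) t = 4"
  by (simp_all add: poly_BP dd_def FP_def GP_def poly_sum poly_monom ee_def)

lemma main_ind:
  fixes y :: real
  defines "z \<equiv> \<i> * complex_of_real y"
  shows "(cmod (poly (BP (n+1)) z))^2 = poly (FP (n+1)) (y^2) \<and> (cmod (poly (BP n) z))^2 = poly (FP n) (y^2)
     \<and> 2 * Re (poly (BP (n+1)) z * cnj (poly (BP n) z)) = poly (GP (n+1)) (y^2)"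
proof (induction n)
  case 0
  show ?case by (simp add: base_vals z_def cmod_power2)
next
  case (Suc n)
  define A where "A = poly (BP (n+1)) z"
  define B where "B = poly (BP n) z"
  define \<alpha> where "\<alpha> = 2*(2*real n+3)"
  define t where "t = y^2"
  have C: "poly (BP (n+2)) z = of_real \<alpha> * A - of_real t * B"
  proof -
    have "z^2 = - of_real (y^2)" by (simp add: z_def power_mult_distrib)
    then show ?thesis unfolding u_rec A_def B_def \<alpha>_def t_def by simp
  qed
  have hP1: "(Re A)^2 + (Im A)^2 = poly (FP (n+1)) t" using Suc.IH unfolding A_def t_def by (simp add: cmod_power2)
  have hP0: "(Re B)^2 + (Im B)^2 = poly (FP n) t" using Suc.IH unfolding B_def t_def by (simp add: cmod_power2)
  have hM: "2 * (Re A * Re B + Im A * Im B) = poly (GP (n+1)) t" using Suc.IH unfolding A_def B_def t_def by simp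
  have F2: "poly (FP (n+2)) t = \<alpha>^2 * poly (FP (n+1)) t - \<alpha> * (t * poly (GP (n+1)) t) + t * (t * poly (FP n) t)"
    unfolding FP_rec \<alpha>_def by simp
  have G2: "poly (GP (n+2)) t = 2 * \<alpha> * poly (FP (n+1)) t - t * poly (GP (n+1)) t"
    unfolding GP_rec \<alpha>_def by (simp add: algebra_simps)
  have 1: "(cmod (poly (BP (n+2)) z))^2 = poly (FP (n+2)) t"
    unfolding F2 C cmod_power2 hP1[symmetric] hP0[symmetric] hM[symmetric]
    by (simp add: power2_eq_square algebra_simps)
  have 2: "2 * Re (poly (BP (n+2)) z * cnj A) = poly (GP (n+2)) t"
    unfolding G2 C hP1[symmetric] hP0[symmetric] hM[symmetric]
    by (simp add: power2_eq_square algebra_simps)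
  show ?case using 1 2 Suc.IH unfolding A_def t_def by (simp add: add.commute)
qed



lemma FP_sum: "fact n * poly (FP n) (x^2) =
   (\<Sum>k=0..n. real (n choose k) * (fact (2*k) / fact k) * fact (n+k) * x ^ (2*(n-k)))"
proof -
  have "fact n * poly (FP n) (x^2) = (\<Sum>j=0..n. fact n * ee n j * (x^2)^j)"
    by (simp add: FP_def poly_sum poly_monom sum_distrib_left mult.assoc)
  also have "\<dots> = (\<Sum>k=0..n. fact n * ee n (n-k) * (x^2)^(n-k))"
    by (subst sum.atLeastAtMost_rev) simp
  also have "\<dots> = (\<Sum>k=0..n. real (n choose k) * (fact (2*k) / fact k) * fact (n+k) * x ^ (2*(n-k)))"
  proof (rule sum.cong[OF refl])
    fix k assume k: "k \<in> {0..n}"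
    have e: "ee n (n-k) = real (n choose k) * fact (2*k) * fact (n+k) / (fact k * fact n)"
    proof -
      have "n - (n-k) = k" "2*n - (n-k) = n+k" "n choose (n-k) = n choose k" using k
        by (auto simp: binomial_symmetric[symmetric])
      then show ?thesis by (simp add: ee_def)
    qed
    show "fact n * ee n (n-k) * (x^2)^(n-k) = real (n choose k) * (fact (2*k) / fact k) * fact (n+k) * x ^ (2*(n-k))"
      unfolding e by (simp add: power_mult[symmetric] field_simps)
  qed
  finally show ?thesis .
qed

lemma cmod_BP: "(cmod (poly (BP n) (\<i> * complex_of_real y)))^2 = poly (FP n) (y^2)"
  using main_ind[where y=y and n=n] by simp

lemma BP0: "poly (BP n) 0 = of_real (fact (2*n) / fact n)"
  by (simp add: poly_0_coeff_0 coeff_BP dd_def)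

theorem mainTheorem6:
  fixes m n :: nat and \<gamma> \<omega> :: real
  assumes "n > m"
  shows "(cmod (budak \<gamma> m n (\<i> * of_real \<omega>)))\<^sup>2 =
    (fact (2*n) / fact (2*m))\<^sup>2 * (fact m / fact n) *
    ((\<Sum>i=0..m. real (m choose i) * (fact (2*i) / fact i) * fact (m+i)
                  * (2 * (\<gamma> - 1) * \<omega>) ^ (2*(m-i)))
     / (\<Sum>k=0..n. real (n choose k) * (fact (2*k) / fact k) * fact (n+k)
                  * (2 * \<gamma> * \<omega>) ^ (2*(n-k))))"
proof -
  define x1 where "x1 = 2*(\<gamma>-1)*\<omega>"
  define x2 where "x2 = 2*\<gamma>*\<omega>"
  define Sm where "Sm = (\<Sum>i=0..m. real (m choose i) * (fact (2*i) / fact i) * fact (m+i) * x1 ^ (2*(m-i)))"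
  define Sn where "Sn = (\<Sum>k=0..n. real (n choose k) * (fact (2*k) / fact k) * fact (n+k) * x2 ^ (2*(n-k)))"
  have a1: "2 * (complex_of_real \<gamma> - 1) * (\<i> * complex_of_real \<omega>) = \<i> * complex_of_real x1"
    by (simp add: x1_def algebra_simps)
  have a2: "2 * complex_of_real \<gamma> * (\<i> * complex_of_real \<omega>) = \<i> * complex_of_real x2"
    by (simp add: x2_def algebra_simps)
  have hm: "(cmod (poly (BP m) (\<i> * complex_of_real x1)))^2 = Sm / fact m"
    unfolding cmod_BP Sm_def FP_sum[symmetric] by simp
  have hn: "(cmod (poly (BP n) (\<i> * complex_of_real x2)))^2 = Sn / fact n"
    unfolding cmod_BP Sn_def FP_sum[symmetric] by simp
  have "(cmod (budak \<gamma> m n (\<i> * of_real \<omega>)))\<^sup>2 =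
      ((fact (2*n) / fact n) / (fact (2*m) / fact m))^2 *
      ((cmod (poly (BP m) (\<i> * complex_of_real x1)))^2 / (cmod (poly (BP n) (\<i> * complex_of_real x2)))^2)"
    unfolding budak_def a1 a2 bessel_BP BP0
    by (simp add: norm_mult norm_divide power_mult_distrib power_divide del: of_real_divide) (simp add: ac_simps)
  also have "\<dots> = (fact (2*n) / fact (2*m))\<^sup>2 * (fact m / fact n) * (Sm / Sn)"
    unfolding hm hn
    by (cases "Sn = 0") (simp_all add: field_simps power2_eq_square)
  finally show ?thesis unfolding Sm_def Sn_def x1_def x2_def .
qed


end
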